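(* Let $r\ge1$ and let $\Psi(x,\hbar):=\sum_{j\ge0}s_{(j)}(\tilde{\mathbf t}/\hbar)\,x^j\prod_{l=1}^j\frac{1}{1-\hbar(l-1)}$ with $\tilde t_k=\delta_{k,r}/r$ (the wave function of monotone $r$-orbifold Hurwitz numbers). Then $$\hat x\Big(\hat x^{r-1}+\prod_{j=1}^r\big(1+\hat x\hat y+\hbar(j-1)\big)\hat y\Big)\Psi(x,\hbar)=0,\qquad\hat x=x\cdot,\ \hat y=-\hbar\frac{\partial}{\partial x}.$$ In particular for $r=1$: $\hat x(\hat x\hat y^2+\hat y+1)\Psi=0$.
   Context: $s_{(j)}$ is defined by $\exp(\sum_{m\ge1}t_mx^m)=\sum_{j\ge0}s_{(j)}(\mathbf t)x^j$, and $\tilde{\mathbf t}/\hbar=(\tilde t_1/\hbar,\tilde t_2/\hbar,\dots)$; with $\tilde t_k=\delta_{k,r}/r$ this gives $s_{(j)}=0$ unless $r\mid j$ and $s_{(rn)}=1/(n!\,r^n\hbar^n)$. $\Psi$ is a formal power series in $x$ with coefficients formal in $\hbar$. *)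

theory Defs
  imports "HOL-Computational_Algebra.Formal_Power_Series" "HOL-Computational_Algebra.Formal_Laurent_Series"
begin

abbreviation hbar :: "real fls" where "hbar \<equiv> fls_X"

definition schur_row :: "(nat \<Rightarrow> 'a::field) \<Rightarrow> nat \<Rightarrow> 'a" where
  "schur_row t j = fps_nth (fps_compose (fps_exp 1) (Abs_fps (\<lambda>m. if m = 0 then 0 else t m))) j"

definition ttilde :: "nat \<Rightarrow> nat \<Rightarrow> real fls" where
  "ttilde r k = (if k = r then 1 / of_nat r else 0)"

definition Psi :: "nat \<Rightarrow> real fls fps" where
  "Psi r = Abs_fps (\<lambda>j. schur_row (\<lambda>k. ttilde r k / hbar) j *
       (\<Prod>l\<in>{1..j}. 1 / (1 - hbar * of_nat (l - 1))))"

definition opX :: "real fls fps \<Rightarrow> real fls fps" where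
  "opX f = fps_X * f"

definition opY :: "real fls fps \<Rightarrow> real fls fps" where
  "opY f = - fps_const hbar * fps_deriv f"

definition opFactor :: "nat \<Rightarrow> real fls fps \<Rightarrow> real fls fps" where
  "opFactor j f = f + opX (opY f) + fps_const (hbar * of_nat (j - 1)) * f"

definition opProd :: "nat \<Rightarrow> real fls fps \<Rightarrow> real fls fps" where
  "opProd r = foldr (\<circ>) (map opFactor [1..<r+1]) id"

end

theory Submission imports Defs begin
declare fls_divide_X[simp del] fls_divide_X_power[simp del]

lemma schur_rec:
  assumes "r \<ge> 1"
  shows "of_nat (Suc n) * schur_row (\<lambda>k. ttilde r k / hbar) (Suc n) =
     (if n < r - 1 then 0 else schur_row (\<lambda>k. ttilde r k / hbar) (Suc n - r) / hbar)"
proof -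
  define c where "c = 1 / (of_nat r * hbar)"
  have cr: "of_nat r * c = 1 / hbar" using assms unfolding c_def by simp
  define g where "g = Abs_fps (\<lambda>m. if m = r then c else 0 :: real fls)"
  define E where "E = fps_exp 1 oo g"
  have geq: "Abs_fps (\<lambda>m. if m = 0 then 0 else ttilde r m / hbar) = g"
    using assms unfolding g_def c_def ttilde_def by (intro fps_ext) (auto simp: divide_divide_eq_left)
  have g0: "g $ 0 = 0" using assms by (simp add: g_def)
  have gd: "fps_deriv g = fps_const (1/hbar) * fps_X ^ (r - 1)"
  proof (rule fps_ext)
    fix n show "fps_deriv g $ n = (fps_const (1/hbar) * fps_X ^ (r - 1)) $ n"
      using assms cr unfolding g_def by (auto simp: fps_X_power_mult_nth)
  qed
  have dE: "fps_deriv E = E * (fps_const (1/hbar) * fps_X ^ (r - 1))"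
    unfolding E_def using fps_compose_deriv[OF g0, of "fps_exp 1"] gd
    by (simp add: fps_compose_mult_distrib fps_compose_sub_distrib)
  have s: "\<And>j. schur_row (\<lambda>k. ttilde r k / hbar) j = E $ j"
    unfolding schur_row_def E_def geq by simp
  have "fps_deriv E $ n = (fps_const (1/hbar) * (E * fps_X ^ (r - 1))) $ n"
    unfolding dE by (simp add: ac_simps)
  also have "\<dots> = (E * fps_X ^ (r - 1)) $ n / hbar" by simp
  moreover have "n - (r - Suc 0) = Suc n - r" using assms by arith
  ultimately show ?thesis unfolding s by (simp add: fps_X_power_mult_right_nth mult.commute)
qed

lemma nz: "1 - hbar * of_nat c \<noteq> 0"
proof
  assume "1 - hbar * of_nat c = 0"
  hence "fls_nth (1 - hbar * of_nat c) 0 = 0" by simp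
  thus False by simp
qed

lemma opFactor_nth: "opFactor j f $ k = (1 - hbar * of_nat k + hbar * of_nat (j - 1)) * f $ k"
  by (cases k) (simp_all add: opFactor_def opX_def opY_def fps_X_mult_nth algebra_simps)

lemma foldr_nth: "(foldr (\<circ>) (map opFactor xs) id f) $ k =
   prod_list (map (\<lambda>j. 1 - hbar * of_nat k + hbar * of_nat (j - 1)) xs) * f $ k"
  by (induction xs) (simp_all add: opFactor_nth)

lemma opX_pow: "(opX ^^ n) f = fps_X ^ n * f"
  by (induction n) (simp_all add: opX_def)

definition Q :: "nat \<Rightarrow> real fls" where
  "Q j = (\<Prod>l\<in>{1..j}. 1 / (1 - hbar * of_nat (l - 1)))"

lemma Q_prod: "i \<le> m \<Longrightarrow>
  Q m * prod_list (map (\<lambda>j. 1 - hbar * of_nat (m - 1) + hbar * of_nat (j - 1)) [1..<i+1]) = Q (m - i)"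
proof (induction i)
  case 0 then show ?case by simp
next
  case (Suc i)
  have IH: "Q m * prod_list (map (\<lambda>j. 1 - hbar * of_nat (m - 1) + hbar * of_nat (j - 1)) [1..<i+1]) = Q (m - i)"
    using Suc by simp
  have e: "m - i = Suc (m - Suc i)" using Suc.prems by arith
  have f: "1 - hbar * of_nat (m - 1) + hbar * of_nat i = 1 - hbar * of_nat (m - Suc i)"
  proof -
    have "of_nat (m - 1) = (of_nat (m - Suc i) + of_nat i :: real fls)"
      using Suc.prems by (simp flip: of_nat_add)
    thus ?thesis by (simp add: algebra_simps)
  qed
  have "Q (m - i) = Q (m - Suc i) * (1 / (1 - hbar * of_nat (m - Suc i)))"
    unfolding e Q_def by simp
  define F where "F = (\<lambda>j. 1 - hbar * of_nat (m - 1) + hbar * of_nat (j - 1))"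
  have FS: "F (Suc i) = 1 - hbar * of_nat (m - Suc i)" unfolding F_def using f by simp
  have L: "prod_list (map F [1..<Suc i+1]) = prod_list (map F [1..<i+1]) * F (Suc i)" by simp
  have "Q m * prod_list (map F [1..<Suc i+1]) = Q (m - i) * F (Suc i)"
    unfolding L using IH unfolding F_def by (simp add: mult.assoc)
  also have "Q (m - i) * F (Suc i) = Q (m - Suc i)" unfolding FS using \<open>Q (m - i) = _\<close> nz[of "m - Suc i"] by simp
  finally show ?case unfolding F_def .
qed

theorem proposition6p2:
  fixes r :: nat
  assumes "r \<ge> 1"
  shows "opX ((opX ^^ (r - 1)) (Psi r) + opProd r (opY (Psi r))) = 0"
proof -
  define S where "S = schur_row (\<lambda>k. ttilde r k / hbar)"
  have a: "\<And>j. Psi r $ j = S j * Q j" unfolding Psi_def S_def Q_def by simp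
  have "fps_X ^ (r - 1) * Psi r + opProd r (opY (Psi r)) = 0"
  proof (rule fps_ext)
    fix k
    have rec: "of_nat (Suc k) * S (Suc k) = (if k < r - 1 then 0 else S (Suc k - r) / hbar)"
      unfolding S_def by (rule schur_rec[OF assms])
    have y: "opY (Psi r) $ k = - hbar * ((of_nat (Suc k) * S (Suc k)) * Q (Suc k))"
      unfolding opY_def by (simp add: a fps_deriv_nth algebra_simps)
    show "(fps_X ^ (r - 1) * Psi r + opProd r (opY (Psi r))) $ k = 0 $ k"
    proof (cases "k < r - 1")
      case True
      then show ?thesis using rec y by (simp add: fps_X_power_mult_nth opProd_def foldr_nth)
    next
      case False
      have kk: "k - (r - Suc 0) = Suc k - r" using False assms by arith
      have P: "Q (Suc k) * prod_list (map (\<lambda>j. 1 - hbar * of_nat k + hbar * of_nat (j - 1)) [1..<r+1]) = Q (Suc k - r)"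
        using Q_prod[of r "Suc k"] False assms by simp
      have "opProd r (opY (Psi r)) $ k = - (S (Suc k - r) * Q (Suc k - r))"
        unfolding opProd_def foldr_nth y rec using False P[symmetric] by (simp add: algebra_simps)
      then show ?thesis using False by (simp add: fps_X_power_mult_nth a kk)
    qed
  qed
  then show ?thesis by (simp add: opX_pow opX_def)
qed

end
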